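(* Let $G$ be a finite undirected graph, $\tau\ge1$ an integer, $v\in V(G)$, and $e=(u,v)\in E(G)$. Then $\phi_\tau(e,G)\ge|V(\Omega(v))|$.
   Context: Graphs are finite, simple, undirected and unweighted; paths may repeat vertices and their length is the number of edges. For vertices $v,u$ of a graph $H$, $u$ is $\tau$-hop reachable from $v$ in $H$ (written $u\rightarrow_\tau v$) if there is a path between them in $H$ of length at most $\tau$. $N_\tau(v,H)$ is the set of vertices $u\ne v$ that are $\tau$-hop reachable from $v$ in $H$. For an edge $e=(u,v)$ of $H$, $\Delta_\tau(e,H)=N_\tau(u,H)\cap N_\tau(v,H)$ and $\mathrm{sup}_\tau(e,H)=|\Delta_\tau(e,H)|$. The $(k,\tau)$-truss of $G$ is the maximal subgraph $G'$ of $G$ such that $\mathrm{sup}_\tau(e,G')\ge k-2$ for every $e\in E(G')$ (supports computed inside $G'$) and no more edges of $G$ can be added while keeping this property. The higher-order truss number $\phi_\tau(e,G)$ is the maximum $k$ such that $e$ belongs to the $(k,\tau)$-truss of $G$. The vertex centric $\tau$-diameter subgraph $\Omega(v)$ of $v$ is the subgraph of $G$ induced by $\{v\}\cup\{w : w\rightarrow_{\lfloor\tau/2\rfloor} v \text{ in } G\}$. *)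

theory Defs
  imports Main
begin

type_synonym 'a graph = "'a set \<times> 'a set set"

definition verts :: "'a graph \<Rightarrow> 'a set" where "verts G = fst G"
definition edges :: "'a graph \<Rightarrow> 'a set set" where "edges G = snd G"

definition wf_graph :: "'a graph \<Rightarrow> bool" where
  "wf_graph G \<longleftrightarrow> finite (verts G) \<and>
     (\<forall>e\<in>edges G. \<exists>x y. x \<noteq> y \<and> e = {x, y} \<and> x \<in> verts G \<and> y \<in> verts G)"

definition adjrel :: "'a set set \<Rightarrow> ('a \<times> 'a) set" where
  "adjrel E = {(x, y). {x, y} \<in> E}"

definition hop_reach :: "'a graph \<Rightarrow> nat \<Rightarrow> 'a \<Rightarrow> 'a \<Rightarrow> bool" where
  "hop_reach H \<tau> u w \<longleftrightarrow> (\<exists>m\<le>\<tau>. (u, w) \<in> (adjrel (edges H)) ^^ m)"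

definition N_tau :: "'a graph \<Rightarrow> nat \<Rightarrow> 'a \<Rightarrow> 'a set" where
  "N_tau H \<tau> v = {u \<in> verts H. u \<noteq> v \<and> hop_reach H \<tau> u v}"

definition sup_tau :: "'a graph \<Rightarrow> nat \<Rightarrow> 'a \<Rightarrow> 'a \<Rightarrow> nat" where
  "sup_tau H \<tau> u v = card (N_tau H \<tau> u \<inter> N_tau H \<tau> v)"

text \<open>A subgraph is given by a set F of edges of G (isolated vertices do not
  affect supports). Property: every edge has support at least k - 2 inside it
  (written as sup + 2 \<ge> k to avoid natural-number truncation).\<close>
definition truss_prop :: "'a graph \<Rightarrow> nat \<Rightarrow> nat \<Rightarrow> 'a set set \<Rightarrow> bool" where
  "truss_prop G \<tau> k F \<longleftrightarrow> F \<subseteq> edges G \<and>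
     (\<forall>x y. {x, y} \<in> F \<longrightarrow> sup_tau (verts G, F) \<tau> x y + 2 \<ge> k)"

definition is_truss :: "'a graph \<Rightarrow> nat \<Rightarrow> nat \<Rightarrow> 'a set set \<Rightarrow> bool" where
  "is_truss G \<tau> k F \<longleftrightarrow> truss_prop G \<tau> k F \<and>
     (\<forall>F'. truss_prop G \<tau> k F' \<and> F \<subseteq> F' \<longrightarrow> F' = F)"

definition truss :: "'a graph \<Rightarrow> nat \<Rightarrow> nat \<Rightarrow> 'a set set" where
  "truss G \<tau> k = (THE F. is_truss G \<tau> k F)"

definition phi_tau :: "'a graph \<Rightarrow> nat \<Rightarrow> 'a set \<Rightarrow> nat" where
  "phi_tau G \<tau> e = Max {k. e \<in> truss G \<tau> k}"

definition Omega :: "'a graph \<Rightarrow> nat \<Rightarrow> 'a \<Rightarrow> 'a graph" where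
  "Omega G \<tau> v = (let S = {v} \<union> {w \<in> verts G. hop_reach G (\<tau> div 2) w v}
                    in (S, {e \<in> edges G. e \<subseteq> S}))"

end

theory Submission
  imports Defs
begin

lemma relpow_mono_sub: "(R :: ('a \<times> 'a) set) \<subseteq> S \<Longrightarrow> (x, y) \<in> R ^^ n \<Longrightarrow> (x, y) \<in> S ^^ n"
proof (induction n arbitrary: x)
  case 0 then show ?case by simp
next
  case (Suc n)
  obtain z where z: "(x, z) \<in> R" "(z, y) \<in> R ^^ n" using relpow_Suc_D2[OF Suc.prems(2)] by blast
  have "(x, z) \<in> S" using z(1) Suc.prems(1) by blast
  moreover have "(z, y) \<in> S ^^ n" using Suc.IH[OF Suc.prems(1) z(2)] .
  ultimately show ?case by (rule relpow_Suc_I2)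
qed

lemma adjrel_sym: "(x, y) \<in> adjrel E \<Longrightarrow> (y, x) \<in> adjrel E"
  by (simp add: adjrel_def insert_commute)

lemma relpow_adj_sym: "(x, y) \<in> adjrel E ^^ n \<Longrightarrow> (y, x) \<in> adjrel E ^^ n"
proof (induction n arbitrary: x)
  case 0 then show ?case by simp
next
  case (Suc n)
  obtain z where z: "(x, z) \<in> adjrel E" "(z, y) \<in> adjrel E ^^ n"
    using relpow_Suc_D2[OF Suc.prems] by blast
  have "(y, z) \<in> adjrel E ^^ n" using Suc.IH[OF z(2)] .
  moreover have "(z, x) \<in> adjrel E" using adjrel_sym[OF z(1)] .
  ultimately show ?case by (rule relpow_Suc_I)
qed

lemma sup_mono:
  assumes "finite V" "F \<subseteq> F'"
  shows "sup_tau (V, F) t x y \<le> sup_tau (V, F') t x y"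
proof -
  have h: "hop_reach (V, F) t a b \<Longrightarrow> hop_reach (V, F') t a b" for a b
    using assms(2) relpow_mono_sub[of "adjrel F" "adjrel F'"]
    unfolding hop_reach_def edges_def adjrel_def by fastforce
  have "N_tau (V, F) t z \<subseteq> N_tau (V, F') t z" for z
    using h unfolding N_tau_def verts_def by auto
  moreover have "finite (N_tau (V, F') t z)" for z
    using assms(1) unfolding N_tau_def verts_def by auto
  ultimately show ?thesis unfolding sup_tau_def
    by (meson Int_mono card_mono finite_Int)
qed

lemma truss_char:
  assumes "wf_graph G"
  shows "truss G t k = \<Union>{F. truss_prop G t k F}"
proof -
  let ?M = "\<Union>{F. truss_prop G t k F}"
  have fin: "finite (verts G)" using assms by (simp add: wf_graph_def)
  have M: "truss_prop G t k ?M"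
    unfolding truss_prop_def[of G t k ?M]
  proof (intro conjI allI impI)
    show "?M \<subseteq> edges G"
    proof (rule Union_least)
      fix F assume "F \<in> {F. truss_prop G t k F}"
      then show "F \<subseteq> edges G" by (simp add: truss_prop_def)
    qed
  next
    fix x y assume "{x, y} \<in> ?M"
    then obtain F where F: "truss_prop G t k F" "{x, y} \<in> F" by blast
    then have "k \<le> sup_tau (verts G, F) t x y + 2" unfolding truss_prop_def by blast
    moreover have "F \<subseteq> ?M" using F(1) by blast
    moreover have "sup_tau (verts G, F) t x y \<le> sup_tau (verts G, ?M) t x y"
      using sup_mono[OF fin] calculation(2) by blast
    ultimately show "k \<le> sup_tau (verts G, ?M) t x y + 2" by linarith
  qed
  have mx: "truss_prop G t k F' \<Longrightarrow> F' \<subseteq> ?M" for F'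
    by (rule Union_upper) simp
  have "is_truss G t k ?M" unfolding is_truss_def[of G t k ?M]
    using M mx by (meson subset_antisym)
  moreover have "F = ?M" if iF: "is_truss G t k F" for F
  proof -
    have "truss_prop G t k F" "\<And>F'. truss_prop G t k F' \<and> F \<subseteq> F' \<longrightarrow> F' = F"
      using iF unfolding is_truss_def by blast+
    then show ?thesis using M mx by metis
  qed
  ultimately show ?thesis unfolding truss_def by (rule the_equality)
qed

lemma truss_bound:
  assumes "wf_graph G" "{x, y} \<in> truss G t k"
  shows "k \<le> card (verts G) + 2"
proof -
  obtain F where F: "truss_prop G t k F" "{x, y} \<in> F" using assms truss_char by blast
  then have "k \<le> sup_tau (verts G, F) t x y + 2" unfolding truss_prop_def by blast
  moreover have "sup_tau (verts G, F) t x y \<le> card (verts G)"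
    unfolding sup_tau_def N_tau_def verts_def
    using assms(1) unfolding wf_graph_def verts_def
    by (intro card_mono) auto
  ultimately show ?thesis by linarith
qed

lemma ends:
  assumes "wf_graph G" "{a, b} \<in> edges G"
  shows "a \<in> verts G \<and> b \<in> verts G"
proof -
  obtain x y where xy: "{a, b} = {x, y}" "x \<in> verts G" "y \<in> verts G"
    using assms unfolding wf_graph_def by blast
  have "a \<in> {x, y}" "b \<in> {x, y}" using xy(1) by (metis insertI1 insert_commute)+
  then show ?thesis using xy by blast
qed

lemma path_in_S:
  assumes w: "wf_graph G" and "(w, v) \<in> adjrel (edges G) ^^ m" and "m \<le> d"
  shows "(w, v) \<in> adjrel {e \<in> edges G. e \<subseteq> {v} \<union> {w \<in> verts G. hop_reach G d w v}} ^^ m"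
  using assms(2,3)
proof (induction m arbitrary: w)
  case 0 then show ?case by simp
next
  case (Suc m)
  then obtain z where z: "(w, z) \<in> adjrel (edges G)" "(z, v) \<in> adjrel (edges G) ^^ m"
    using relpow_Suc_D2 by metis
  have e: "{w, z} \<in> edges G" using z(1) by (simp add: adjrel_def)
  then have "w \<in> verts G" "z \<in> verts G" using ends[OF w] by blast+
  moreover have "hop_reach G d w v" unfolding hop_reach_def using Suc.prems by blast
  moreover have "hop_reach G d z v" unfolding hop_reach_def using Suc.prems z(2)
    by (intro exI[of _ m]) simp
  ultimately have "(w, z) \<in> adjrel {e \<in> edges G. e \<subseteq> {v} \<union> {w \<in> verts G. hop_reach G d w v}}"
    using e by (simp add: adjrel_def)
  moreover have "(z, v) \<in> adjrel {e \<in> edges G. e \<subseteq> {v} \<union> {w \<in> verts G. hop_reach G d w v}} ^^ m"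
    using Suc.IH[OF z(2)] Suc.prems by simp
  ultimately show ?case by (rule relpow_Suc_I2)
qed

theorem lemma4:
  fixes G :: "'a graph" and \<tau> :: nat and u v :: 'a
  assumes "wf_graph G" and "\<tau> \<ge> 1" and "v \<in> verts G" and "{u, v} \<in> edges G"
  shows "card (verts (Omega G \<tau> v)) \<le> phi_tau G \<tau> {u, v}"
proof -
  define d where "d = \<tau> div 2"
  define S where "S = {v} \<union> {w \<in> verts G. hop_reach G d w v}"
  define K where "K = card S"
  have KS: "card (verts (Omega G \<tau> v)) = K"
    unfolding K_def S_def d_def Omega_def verts_def by (simp add: Let_def)
  have fin: "finite (verts G)" using assms(1) by (simp add: wf_graph_def)
  have finS: "finite S" unfolding S_def using fin by auto
  have mem: "{u, v} \<in> truss G \<tau> K"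
  proof (cases "\<tau> \<ge> 2")
    case False
    then have "d = 0" unfolding d_def by simp
    then have "S = {v}" unfolding S_def hop_reach_def by auto
    then have "K = 1" unfolding K_def by simp
    then have "truss_prop G \<tau> K (edges G)" unfolding truss_prop_def by simp
    then show ?thesis using truss_char[OF assms(1)] assms(4) by blast
  next
    case True
    define F where "F = {e \<in> edges G. e \<subseteq> S}"
    have reachF: "\<exists>m\<le>d. (x, v) \<in> adjrel F ^^ m" if xS: "x \<in> S" for x
    proof (cases "x = v")
      case True then show ?thesis by (intro exI[of _ 0]) simp
    next
      case False
      have "hop_reach G d x v" using xS False unfolding S_def by auto
      then obtain m where m: "m \<le> d" "(x, v) \<in> adjrel (edges G) ^^ m"
        unfolding hop_reach_def by auto
      have "(x, v) \<in> adjrel F ^^ m"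
        using path_in_S[OF assms(1) m(2) m(1)] unfolding F_def S_def .
      then show ?thesis using m(1) by (intro exI[of _ m]) simp
    qed
    have hopF: "hop_reach (verts G, F) \<tau> w x" if xS2: "x \<in> S" and wS2: "w \<in> S" for x w
    proof -
      have dd: "2 * d \<le> \<tau>" unfolding d_def by simp
      obtain m1 where m1: "m1 \<le> d" "(w, v) \<in> adjrel F ^^ m1" using reachF[OF wS2] by blast
      obtain m2 where m2: "m2 \<le> d" "(x, v) \<in> adjrel F ^^ m2" using reachF[OF xS2] by blast
      have "(v, x) \<in> adjrel F ^^ m2" using relpow_adj_sym[OF m2(2)] .
      with m1(2) have "(w, x) \<in> adjrel F ^^ m1 O adjrel F ^^ m2" by (rule relcompI)
      then have "(w, x) \<in> adjrel F ^^ (m1 + m2)" by (simp add: relpow_add)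
      moreover have "m1 + m2 \<le> \<tau>" using m1(1) m2(1) dd by linarith
      ultimately show ?thesis unfolding hop_reach_def edges_def by (intro exI[of _ "m1 + m2"]) simp
    qed
    have Sv: "S \<subseteq> verts G" unfolding S_def using assms(3) by auto
    have tp: "truss_prop G \<tau> K F"
      unfolding truss_prop_def
    proof (intro conjI allI impI)
      show "F \<subseteq> edges G" unfolding F_def by blast
    next
      fix x y assume xy: "{x, y} \<in> F"
      then have xyS: "x \<in> S" "y \<in> S" unfolding F_def by auto
      have sub: "S - {x, y} \<subseteq> N_tau (verts G, F) \<tau> x \<inter> N_tau (verts G, F) \<tau> y"
        unfolding N_tau_def verts_def using Sv hopF xyS by (auto simp: verts_def)
      have "card (S - {x, y}) \<le> sup_tau (verts G, F) \<tau> x y"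
        unfolding sup_tau_def
        by (rule card_mono[OF _ sub]) (use fin in \<open>auto simp: N_tau_def verts_def\<close>)
      moreover have "card S \<le> card (S - {x, y}) + card {x, y}"
      proof -
        have "S \<subseteq> (S - {x, y}) \<union> {x, y}" by blast
        then have "card S \<le> card ((S - {x, y}) \<union> {x, y})"
          using finS by (intro card_mono) auto
        also have "\<dots> \<le> card (S - {x, y}) + card {x, y}" by (rule card_Un_le)
        finally show ?thesis .
      qed
      moreover have "card {x, y} \<le> 2" by (simp add: card_insert_le_m1)
      ultimately show "K \<le> sup_tau (verts G, F) \<tau> x y + 2" unfolding K_def by linarith
    qed
    have "u \<in> S"
    proof -
      have "(u, v) \<in> adjrel (edges G) ^^ 1" using assms(4) by (simp add: adjrel_def)
      moreover have "1 \<le> d" using True unfolding d_def by simp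
      moreover have "u \<in> verts G" using ends[OF assms(1,4)] by blast
      ultimately show ?thesis unfolding S_def hop_reach_def by blast
    qed
    then have "{u, v} \<in> F" unfolding F_def S_def using assms(4) by auto
    then show ?thesis using tp truss_char[OF assms(1)] by blast
  qed
  have "{k. {u, v} \<in> truss G \<tau> k} \<subseteq> {..card (verts G) + 2}"
  proof
    fix k assume "k \<in> {k. {u, v} \<in> truss G \<tau> k}"
    then have "{u, v} \<in> truss G \<tau> k" by simp
    then have "k \<le> card (verts G) + 2" by (rule truss_bound[OF assms(1)])
    then show "k \<in> {..card (verts G) + 2}" by simp
  qed
  then have "finite {k. {u, v} \<in> truss G \<tau> k}" by (rule finite_subset) simp
  moreover have "K \<in> {k. {u, v} \<in> truss G \<tau> k}" using mem by simp
  ultimately have "K \<le> Max {k. {u, v} \<in> truss G \<tau> k}" by (rule Max_ge)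
  then show ?thesis using KS unfolding phi_tau_def by simp
qed

end
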